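(* Let $n \ge 3$, let $u_1,u_2 \in M_n(\mathbb C)$ be unitaries such that $\{1_n, u_1^*u_2, u_2^*u_1\}$ is linearly independent, let $0<t<1$, and define $\Phi\colon M_n(\mathbb C)\to M_n(\mathbb C)$ by $\Phi(x) = t\,u_1xu_1^* + (1-t)\,u_2xu_2^*$. Then for every integer $k \ge 2$, $\Phi$ is $k$-noisy if and only if $t \in k^{-1}\mathbb Z$. In particular, if $t$ is irrational, $\Phi$ is a mixture of unitaries that is not $k$-noisy for any $k\ge 2$.
   Context: A linear map $\Phi\colon M_n(\mathbb C)\to M_n(\mathbb C)$ is factorizable with ancilla $(\mathcal A,\tau)$ if $(\mathcal A,\tau)$ is a von Neumann algebra with a normal faithful tracial state $\tau$ and there is a unitary $u \in M_n(\mathbb C)\otimes \mathcal A$ with $\Phi(x) = (\mathrm{id}_n\otimes\tau)(u(x\otimes 1_{\mathcal A})u^* )$ for all $x\in M_n(\mathbb C)$. $\Phi$ is called $k$-noisy if it is factorizable with ancilla $(M_k(\mathbb C),\mathrm{tr}_k)$, where $\mathrm{tr}_k$ is the normalized trace. *)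

theory Defs
  imports "HOL-Analysis.Analysis"
begin

text \<open>Matrices in M_n(C) are represented as complex^'n^'n for a finite index type 'n
  (n = CARD('n)).  The ancilla M_k(C) is indexed by a finite type 'k (k = CARD('k)),
  and M_n(C) \<otimes> M_k(C) is identified with complex^('n\<times>'k)^('n\<times>'k).\<close>

definition adjoint_mat :: "complex^'m^'n \<Rightarrow> complex^'n^'m" where
  "adjoint_mat A = (\<chi> i j. cnj (A $ j $ i))"

definition unitary_mat :: "complex^'n^'n \<Rightarrow> bool" where
  "unitary_mat U \<longleftrightarrow> U ** adjoint_mat U = mat 1 \<and> adjoint_mat U ** U = mat 1"

definition cscale_mat :: "complex \<Rightarrow> complex^'m^'n \<Rightarrow> complex^'m^'n" where
  "cscale_mat c A = (\<chi> i j. c * A $ i $ j)"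

definition tensor_id :: "complex^'n^'n \<Rightarrow> complex^('n \<times> 'k::finite)^('n \<times> 'k)" where
  "tensor_id x = (\<chi> p q. x $ fst p $ fst q * (if snd p = snd q then 1 else 0))"

definition partial_tr :: "complex^('n \<times> 'k::finite)^('n \<times> 'k) \<Rightarrow> complex^'n^'n" where
  "partial_tr M = (\<chi> i j. (\<Sum>a\<in>(UNIV::'k set). M $ (i, a) $ (j, a)) / of_nat CARD('k))"

text \<open>\<Phi> is factorizable with ancilla (M_k(C), tr_k), k = CARD('k).\<close>
definition k_noisy :: "'k::finite itself \<Rightarrow> (complex^'n^'n \<Rightarrow> complex^'n^'n) \<Rightarrow> bool" where
  "k_noisy _ \<Phi> \<longleftrightarrow> (\<exists>u :: complex^('n \<times> 'k)^('n \<times> 'k). unitary_mat u \<and>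
      (\<forall>x. \<Phi> x = partial_tr (u ** (tensor_id x :: complex^('n \<times> 'k)^('n \<times> 'k)) ** adjoint_mat u)))"

end

theory Submission
  imports Defs
begin


definition ip :: "('p::finite \<Rightarrow> complex) \<Rightarrow> ('p \<Rightarrow> complex) \<Rightarrow> complex" where
  "ip f g = (\<Sum>p\<in>UNIV. f p * cnj (g p))"

lemma ip_lin: "ip (\<lambda>p. a * f p + b * g p) h = a * ip f h + b * ip g h"
  by (simp add: ip_def sum.distrib sum_distrib_left algebra_simps)

lemma ip_lin1: "ip (\<lambda>p. f p - a * g p) h = ip f h - a * ip g h"
  by (simp add: ip_def sum_subtractf sum_distrib_left algebra_simps)

lemma ip_cnj: "ip g f = cnj (ip f g)"
  by (simp add: ip_def mult.commute)

lemma ip_self: "ip f f = of_real (\<Sum>p\<in>UNIV. (cmod (f p))^2)"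
  unfolding ip_def of_real_sum by (rule sum.cong) (auto simp only: complex_norm_square)

lemma ip_self_zero: "ip f f = 0 \<longleftrightarrow> f = (\<lambda>p. 0)"
proof -
  have "ip f f = 0 \<longleftrightarrow> (\<Sum>p\<in>UNIV. (cmod (f p))^2) = 0" unfolding ip_self by (simp only: of_real_eq_0_iff)
  also have "\<dots> \<longleftrightarrow> (\<forall>p. (cmod (f p))^2 = 0)" by (subst sum_nonneg_eq_0_iff) auto
  also have "\<dots> \<longleftrightarrow> f = (\<lambda>p. 0)" by (auto simp: fun_eq_iff)
  finally show ?thesis .
qed

lemma ip_prod: "ip f z * cnj (ip g z) = (\<Sum>P\<in>UNIV. \<Sum>Q\<in>UNIV. f P * cnj (g Q) * (cnj (z P) * z Q))"
  by (simp add: ip_def sum_product algebra_simps)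

lemma quad_form:
  fixes W :: "'q::finite \<Rightarrow> 'p::finite \<Rightarrow> complex" and V1 V2 :: "'p \<Rightarrow> complex"
  assumes H: "\<forall>P Q. (\<Sum>k\<in>UNIV. W k P * cnj (W k Q)) = \<alpha> * V1 P * cnj (V1 Q) + \<beta> * V2 P * cnj (V2 Q)"
  shows "(\<Sum>k\<in>UNIV. ip (W k) z * cnj (ip (W k) z)) = \<alpha> * (ip V1 z * cnj (ip V1 z)) + \<beta> * (ip V2 z * cnj (ip V2 z))"
proof -
  have "(\<Sum>k\<in>UNIV. ip (W k) z * cnj (ip (W k) z)) =
     (\<Sum>k\<in>UNIV. \<Sum>P\<in>UNIV. \<Sum>Q\<in>UNIV. W k P * cnj (W k Q) * (cnj (z P) * z Q))"
    by (simp only: ip_prod)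
  also have "\<dots> = (\<Sum>P\<in>UNIV. \<Sum>k\<in>UNIV. \<Sum>Q\<in>UNIV. W k P * cnj (W k Q) * (cnj (z P) * z Q))"
    by (rule sum.swap)
  also have "\<dots> = (\<Sum>P\<in>UNIV. \<Sum>Q\<in>UNIV. \<Sum>k\<in>UNIV. W k P * cnj (W k Q) * (cnj (z P) * z Q))"
    by (rule sum.cong[OF refl], rule sum.swap)
  also have "\<dots> = (\<Sum>P\<in>UNIV. \<Sum>Q\<in>UNIV. (\<Sum>k\<in>UNIV. W k P * cnj (W k Q)) * (cnj (z P) * z Q))"
    by (simp only: sum_distrib_right)
  also have "\<dots> = (\<Sum>P\<in>UNIV. \<Sum>Q\<in>UNIV. (\<alpha> * V1 P * cnj (V1 Q) + \<beta> * V2 P * cnj (V2 Q)) * (cnj (z P) * z Q))"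
    by (simp only: H)
  also have "\<dots> = (\<Sum>P\<in>UNIV. \<Sum>Q\<in>UNIV. \<alpha> * (V1 P * cnj (V1 Q) * (cnj (z P) * z Q)) + \<beta> * (V2 P * cnj (V2 Q) * (cnj (z P) * z Q)))"
    by (intro sum.cong refl) (simp only: distrib_right mult.assoc)
  also have "\<dots> = \<alpha> * (\<Sum>P\<in>UNIV. \<Sum>Q\<in>UNIV. V1 P * cnj (V1 Q) * (cnj (z P) * z Q))
      + \<beta> * (\<Sum>P\<in>UNIV. \<Sum>Q\<in>UNIV. V2 P * cnj (V2 Q) * (cnj (z P) * z Q))"
    by (simp only: sum.distrib sum_distrib_left)
  also have "\<dots> = \<alpha> * (ip V1 z * cnj (ip V1 z)) + \<beta> * (ip V2 z * cnj (ip V2 z))"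
    by (simp only: ip_prod)
  finally show ?thesis .
qed


lemma ip_lin_r: "ip g (\<lambda>p. a * f p + b * h p) = cnj a * ip g f + cnj b * ip g h"
  by (simp add: ip_def sum.distrib sum_distrib_left algebra_simps)

lemma ip_zero_r: "ip g (\<lambda>p. 0) = 0"
  by (simp add: ip_def)

lemma sum_sq_zero:
  fixes x :: "'q::finite \<Rightarrow> complex"
  assumes "(\<Sum>k\<in>UNIV. x k * cnj (x k)) = 0"
  shows "x k = 0"
proof -
  have "(\<Sum>k\<in>UNIV. x k * cnj (x k)) = of_real (\<Sum>k\<in>UNIV. (cmod (x k))^2)"
    unfolding of_real_sum by (rule sum.cong) (auto simp only: complex_norm_square)
  with assms have "(\<Sum>k\<in>UNIV. (cmod (x k))^2) = 0" by (simp only: of_real_eq_0_iff)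
  then have "\<forall>k\<in>UNIV. (cmod (x k))^2 = 0" by (subst (asm) sum_nonneg_eq_0_iff) auto
  then show ?thesis by simp
qed

lemma kraus2:
  fixes W :: "'q::finite \<Rightarrow> 'p::finite \<Rightarrow> complex" and V1 V2 :: "'p \<Rightarrow> complex"
  assumes H: "\<forall>P Q. (\<Sum>k\<in>UNIV. W k P * cnj (W k Q)) = \<alpha> * V1 P * cnj (V1 Q) + \<beta> * V2 P * cnj (V2 Q)"
  and ind: "\<forall>x y. (\<forall>P. x * V1 P + y * V2 P = 0) \<longrightarrow> x = 0 \<and> y = 0"
  shows "\<exists>c d. (\<forall>k P. W k P = c k * V1 P + d k * V2 P) \<and> (\<Sum>k\<in>UNIV. c k * cnj (c k)) = \<alpha>"
proof -
  note QF = quad_form[OF H]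
  have V1nz: "ip V1 V1 \<noteq> 0"
  proof
    assume "ip V1 V1 = 0"
    then have "V1 = (\<lambda>p. 0)" by (simp add: ip_self_zero)
    then have "\<forall>P. 1 * V1 P + 0 * V2 P = 0" by simp
    with ind have "(1::complex) = 0 \<and> (0::complex) = 0" by blast
    then show False by simp
  qed
  have V2nz: "ip V2 V2 \<noteq> 0"
  proof
    assume "ip V2 V2 = 0"
    then have "V2 = (\<lambda>p. 0)" by (simp add: ip_self_zero)
    then have "\<forall>P. 0 * V1 P + 1 * V2 P = 0" by simp
    with ind have "(0::complex) = 0 \<and> (1::complex) = 0" by blast
    then show False by simp
  qed
  define la where "la = ip V2 V1 / ip V1 V1"
  define f where "f = (\<lambda>P. V2 P - la * V1 P)"
  have fV1: "ip f V1 = 0" unfolding f_def ip_lin1 la_def using V1nz by simp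
  have V1f: "ip V1 f = 0" using fV1 ip_cnj[of V1 f] by simp
  have fnz: "ip f f \<noteq> 0"
  proof
    assume "ip f f = 0"
    then have "f = (\<lambda>p. 0)" by (simp add: ip_self_zero)
    then have "\<forall>P. (- la) * V1 P + 1 * V2 P = 0" unfolding f_def by (auto simp: fun_eq_iff)
    with ind have "- la = 0 \<and> (1::complex) = 0" by blast
    then show False by simp
  qed
  have V2eq: "V2 = (\<lambda>P. 1 * f P + la * V1 P)" unfolding f_def by simp
  define mu where "mu k = ip (W k) V1 / ip V1 V1" for k
  define nu where "nu k = ip (W k) f / ip f f" for k
  define R where "R k = (\<lambda>P. W k P - mu k * V1 P - nu k * f P)" for k
  have RV1: "ip (R k) V1 = 0" for k
  proof -
    have "ip (R k) V1 = ip (\<lambda>P. W k P - mu k * V1 P) V1 - nu k * ip f V1"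
      unfolding R_def by (rule ip_lin1)
    also have "\<dots> = 0" unfolding ip_lin1 fV1 mu_def using V1nz by simp
    finally show ?thesis .
  qed
  have Rf: "ip (R k) f = 0" for k
  proof -
    have "ip (R k) f = ip (\<lambda>P. W k P - mu k * V1 P) f - nu k * ip f f"
      unfolding R_def by (rule ip_lin1)
    also have "\<dots> = 0" unfolding ip_lin1 V1f nu_def using fnz by simp
    finally show ?thesis .
  qed
  have RV2: "ip (R k) V2 = 0" for k
    by (subst V2eq, subst ip_lin_r) (simp add: RV1 Rf)
  have Wzero: "ip (W j) (R k) = 0" for j k
  proof -
    have "(\<Sum>j\<in>UNIV. ip (W j) (R k) * cnj (ip (W j) (R k))) = 0"
      using QF[of "R k"] RV1[of k] RV2[of k] ip_cnj[of V1 "R k"] ip_cnj[of V2 "R k"] by simp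
    then show ?thesis by (rule sum_sq_zero)
  qed
  have Rzero: "R k = (\<lambda>p. 0)" for k
  proof -
    have "ip (R k) (R k) = ip (\<lambda>P. W k P - mu k * V1 P) (R k) - nu k * ip f (R k)"
      unfolding R_def[of k] by (rule ip_lin1)
    also have "\<dots> = 0" unfolding ip_lin1 Wzero
      using ip_cnj[of V1 "R k"] ip_cnj[of f "R k"] RV1[of k] Rf[of k] by simp
    finally show ?thesis by (simp add: ip_self_zero)
  qed
  define c where "c k = mu k - nu k * la" for k
  define d where "d k = nu k" for k
  have Wk: "W k P = c k * V1 P + d k * V2 P" for k P
  proof -
    have "R k P = 0" using Rzero[of k] by (simp add: fun_eq_iff)
    then have "W k P - mu k * V1 P - nu k * (V2 P - la * V1 P) = 0" unfolding R_def f_def by simp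
    then show ?thesis unfolding c_def d_def by (simp add: algebra_simps)
  qed
  have Wk': "W k = (\<lambda>P. c k * V1 P + d k * V2 P)" for k using Wk by auto
  define la' where "la' = ip V1 V2 / ip V2 V2"
  define g where "g = (\<lambda>P. V1 P - la' * V2 P)"
  have gV2: "ip g V2 = 0" unfolding g_def ip_lin1 la'_def using V2nz by simp
  have V2g: "ip V2 g = 0" using gV2 ip_cnj[of V2 g] by simp
  have gnz: "ip g g \<noteq> 0"
  proof
    assume "ip g g = 0"
    then have "g = (\<lambda>p. 0)" by (simp add: ip_self_zero)
    then have "\<forall>P. 1 * V1 P + (- la') * V2 P = 0" unfolding g_def by (auto simp: fun_eq_iff)
    with ind have "(1::complex) = 0 \<and> - la' = 0" by blast
    then show False by simp
  qed
  have gg: "ip g g = ip V1 g"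
  proof -
    have "ip g g = ip V1 g - la' * ip V2 g" by (subst (1) g_def, rule ip_lin1)
    then show ?thesis using V2g by simp
  qed
  have V1gnz: "ip V1 g * cnj (ip V1 g) \<noteq> 0" using gnz gg by simp
  have Wg: "ip (W k) g = c k * ip V1 g" for k
    unfolding Wk' ip_lin V2g by simp
  have "(\<Sum>k\<in>UNIV. c k * cnj (c k)) * (ip V1 g * cnj (ip V1 g)) = \<alpha> * (ip V1 g * cnj (ip V1 g))"
  proof -
    have "(\<Sum>k\<in>UNIV. ip (W k) g * cnj (ip (W k) g)) = \<alpha> * (ip V1 g * cnj (ip V1 g))"
      using QF[of g] V2g by simp
    also have "(\<Sum>k\<in>UNIV. ip (W k) g * cnj (ip (W k) g)) = (\<Sum>k\<in>UNIV. c k * cnj (c k) * (ip V1 g * cnj (ip V1 g)))"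
      unfolding Wg by (intro sum.cong refl) (simp only: complex_cnj_mult mult_ac)
    finally show ?thesis by (simp only: sum_distrib_right)
  qed
  then have "(\<Sum>k\<in>UNIV. c k * cnj (c k)) = \<alpha>" using V1gnz by simp
  with Wk show ?thesis by blast
qed



lemma sum_UNIV_prod:
  "(\<Sum>x\<in>(UNIV::('a::finite \<times> 'b::finite) set). f x) = (\<Sum>a\<in>UNIV. \<Sum>b\<in>UNIV. f (a,b))"
  unfolding UNIV_Times_UNIV[symmetric] sum.cartesian_product by (simp add: split_def)

lemma sum_delta_mult:
  fixes f :: "'a::finite \<Rightarrow> 'b::comm_ring_1"
  shows "(\<Sum>b\<in>UNIV. f b * (if b = c then 1 else 0)) = f c"
proof -
  have "f b * (if b = c then 1 else 0) = (if b = c then f c else 0)" for b by simp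
  then show ?thesis by simp
qed

lemma sum_delta_mult':
  fixes f :: "'a::finite \<Rightarrow> 'b::comm_ring_1"
  shows "(\<Sum>b\<in>UNIV. (if b = c then 1 else 0) * f b) = f c"
proof -
  have "(if b = c then 1 else 0) * f b = (if b = c then f c else 0)" for b by simp
  then show ?thesis by simp
qed

lemma adjoint_entry[simp]: "adjoint_mat A $ i $ j = cnj (A $ j $ i)"
  by (simp add: adjoint_mat_def)

lemma cscale_entry[simp]: "cscale_mat c A $ i $ j = c * A $ i $ j"
  by (simp add: cscale_mat_def)

lemma mult_entry: "(A ** B) $ i $ j = (\<Sum>k\<in>UNIV. A $ i $ k * B $ k $ j)"
  by (simp add: matrix_matrix_mult_def)

lemma adjoint_mult: "adjoint_mat (A ** B) = adjoint_mat B ** adjoint_mat A"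
  by (simp add: vec_eq_iff mult_entry mult.commute)

lemma adjoint_adjoint[simp]: "adjoint_mat (adjoint_mat A) = A"
  by (simp add: vec_eq_iff)

lemma adjoint_add: "adjoint_mat (A + B) = adjoint_mat A + adjoint_mat B"
  by (simp add: vec_eq_iff)

lemma mult_cscale_right: "A ** cscale_mat c B = cscale_mat c (A ** B)"
  by (simp add: vec_eq_iff mult_entry sum_distrib_left mult_ac)

lemma conj_entry: "(A ** x ** adjoint_mat A) $ i $ j =
   (\<Sum>p\<in>UNIV. \<Sum>q\<in>UNIV. A $ i $ p * x $ p $ q * cnj (A $ j $ q))"
  by (simp only: mult_entry adjoint_entry sum_distrib_right) (rule sum.swap)

lemma uT_entry: fixes u :: "complex^('n::finite \<times> 'k::finite)^('n \<times> 'k)" shows "(u ** (tensor_id x :: complex^('n::finite \<times> 'k::finite)^('n \<times> 'k))) $ (i,a) $ (q,c) =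
   (\<Sum>p\<in>UNIV. u $ (i,a) $ (p,c) * x $ p $ q)"
proof -
  have "(u ** (tensor_id x :: complex^('n \<times> 'k)^('n \<times> 'k))) $ (i,a) $ (q,c) =
     (\<Sum>p\<in>UNIV. \<Sum>b\<in>UNIV. (u $ (i,a) $ (p,b) * x $ p $ q) * (if b = c then 1 else 0))"
    by (simp add: mult_entry sum_UNIV_prod tensor_id_def mult_ac)
  also have "\<dots> = (\<Sum>p\<in>UNIV. u $ (i,a) $ (p,c) * x $ p $ q)"
    by (simp only: sum_delta_mult)
  finally show ?thesis .
qed

lemma ptr_entry: fixes u :: "complex^('n::finite \<times> 'k::finite)^('n \<times> 'k)" shows "partial_tr (u ** (tensor_id x :: complex^('n::finite \<times> 'k::finite)^('n \<times> 'k)) ** adjoint_mat u) $ i $ j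
  = (\<Sum>a\<in>UNIV. \<Sum>b\<in>UNIV. \<Sum>p\<in>UNIV. \<Sum>q\<in>UNIV. u $ (i,a) $ (p,b) * x $ p $ q * cnj (u $ (j,a) $ (q,b))) / of_nat CARD('k)"
proof -
  have "(u ** (tensor_id x :: complex^('n \<times> 'k)^('n \<times> 'k)) ** adjoint_mat u) $ (i,a) $ (j,a) =
     (\<Sum>b\<in>UNIV. \<Sum>p\<in>UNIV. \<Sum>q\<in>UNIV. u $ (i,a) $ (p,b) * x $ p $ q * cnj (u $ (j,a) $ (q,b)))" for a
  proof -
    have "(u ** (tensor_id x :: complex^('n \<times> 'k)^('n \<times> 'k)) ** adjoint_mat u) $ (i,a) $ (j,a) =
      (\<Sum>q\<in>UNIV. \<Sum>b\<in>UNIV. (\<Sum>p\<in>UNIV. u $ (i,a) $ (p,b) * x $ p $ q) * cnj (u $ (j,a) $ (q,b)))"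
      by (simp add: mult_entry[of "u ** _"] sum_UNIV_prod uT_entry)
    also have "\<dots> = (\<Sum>b\<in>UNIV. \<Sum>q\<in>UNIV. (\<Sum>p\<in>UNIV. u $ (i,a) $ (p,b) * x $ p $ q) * cnj (u $ (j,a) $ (q,b)))"
      by (rule sum.swap)
    also have "\<dots> = (\<Sum>b\<in>UNIV. \<Sum>q\<in>UNIV. \<Sum>p\<in>UNIV. u $ (i,a) $ (p,b) * x $ p $ q * cnj (u $ (j,a) $ (q,b)))"
      by (simp only: sum_distrib_right)
    also have "\<dots> = (\<Sum>b\<in>UNIV. \<Sum>p\<in>UNIV. \<Sum>q\<in>UNIV. u $ (i,a) $ (p,b) * x $ p $ q * cnj (u $ (j,a) $ (q,b)))"
      by (rule sum.cong[OF refl], rule sum.swap)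
    finally show ?thesis .
  qed
  then show ?thesis by (simp add: partial_tr_def)
qed

definition Emat :: "'n \<Rightarrow> 'n \<Rightarrow> complex^'n^'n" where
  "Emat p q = (\<chi> r s. if r = p \<and> s = q then 1 else 0)"

lemma sum_Emat: "(\<Sum>p'\<in>UNIV. \<Sum>q'\<in>UNIV. f p' * Emat p q $ p' $ q' * g q') = f p * g (q::'n::finite)"
proof -
  have "f p' * Emat p q $ p' $ q' * g q' = (if q' = q then (if p' = p then f p * g q else 0) else 0)" for p' q'
    by (simp add: Emat_def)
  then show ?thesis by simp
qed



lemma herm_entry: assumes "adjoint_mat P = P" shows "cnj (P $ y $ x) = P $ x $ y"
proof -
  have "adjoint_mat P $ x $ y = P $ x $ y" using assms by simp
  then show ?thesis by simp
qed

lemma idem_entry: assumes "P ** P = P" shows "(\<Sum>y\<in>UNIV. P $ x $ y * P $ y $ z) = P $ x $ z"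
proof -
  have "(P ** P) $ x $ z = P $ x $ z" using assms by simp
  then show ?thesis by (simp add: mult_entry)
qed

lemma trace_herm_idem:
  fixes P :: "complex^'k::finite^'k"
  assumes herm: "adjoint_mat P = P" and idem: "P ** P = P"
  shows "trace P = of_real (\<Sum>x\<in>UNIV. \<Sum>y\<in>UNIV. (cmod (P $ y $ x))^2)"
proof -
  have "trace P = (\<Sum>x\<in>UNIV. \<Sum>y\<in>UNIV. P $ x $ y * P $ y $ x)"
    unfolding trace_def using idem_entry[OF idem] by simp
  also have "\<dots> = (\<Sum>x\<in>UNIV. \<Sum>y\<in>UNIV. P $ y $ x * cnj (P $ y $ x))"
    by (intro sum.cong refl) (simp add: herm_entry[OF herm] mult.commute)
  also have "\<dots> = of_real (\<Sum>x\<in>UNIV. \<Sum>y\<in>UNIV. (cmod (P $ y $ x))^2)"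
    unfolding of_real_sum by (intro sum.cong refl) (simp only: complex_norm_square)
  finally show ?thesis .
qed

lemma proj_trace_step:
  fixes P :: "complex^'k::finite^'k"
  assumes herm: "adjoint_mat P = P" and idem: "P ** P = P" and nz: "P \<noteq> 0"
  shows "\<exists>Q :: complex^'k^'k. adjoint_mat Q = Q \<and> Q ** Q = Q \<and> trace Q = trace P - 1"
proof -
  obtain a b where ab: "P $ b $ a \<noteq> 0" using nz by (metis vec_eq_iff zero_index)
  define w where "w x = P $ x $ a" for x
  define s where "s = ip w w"
  have snz: "s \<noteq> 0"
  proof
    assume "s = 0"
    then have "w = (\<lambda>p. 0)" unfolding s_def by (simp add: ip_self_zero)
    then have "w b = 0" by simp
    with ab show False unfolding w_def by simp
  qed
  have s_real: "cnj s = s" unfolding s_def ip_self by simp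
  define r where "r = inverse s"
  have rs: "r * s = 1" unfolding r_def using snz by simp
  have r_real: "cnj r = r" unfolding r_def using s_real by (metis complex_cnj_inverse)
  have Pw: "(\<Sum>y\<in>UNIV. P $ x $ y * w y) = w x" for x
    unfolding w_def by (rule idem_entry[OF idem])
  have wP: "(\<Sum>y\<in>UNIV. cnj (w y) * P $ y $ z) = cnj (w z)" for z
  proof -
    have "cnj (\<Sum>y\<in>UNIV. P $ z $ y * w y) = (\<Sum>y\<in>UNIV. cnj (w y) * P $ y $ z)"
      by (simp add: herm_entry[OF herm] mult.commute)
    then show ?thesis using Pw by metis
  qed
  have ww: "(\<Sum>y\<in>UNIV. cnj (w y) * w y) = s"
    unfolding s_def ip_def by (simp add: mult.commute)
  define Q :: "complex^'k^'k" where "Q = (\<chi> x y. P $ x $ y - r * w x * cnj (w y))"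
  have Qe: "Q $ x $ y = P $ x $ y - r * w x * cnj (w y)" for x y unfolding Q_def by simp
  have hermQ: "adjoint_mat Q = Q"
    by (simp add: vec_eq_iff Qe herm_entry[OF herm] r_real mult_ac)
  have idemQ: "Q ** Q = Q"
  proof -
    have "(Q ** Q) $ x $ z = Q $ x $ z" for x z
    proof -
      have "(Q ** Q) $ x $ z = (\<Sum>y\<in>UNIV. P $ x $ y * P $ y $ z - (r * cnj (w z)) * (P $ x $ y * w y)
           - (r * w x) * (cnj (w y) * P $ y $ z) + (r * r * w x * cnj (w z)) * (cnj (w y) * w y))"
        unfolding mult_entry Qe by (intro sum.cong refl) (simp add: algebra_simps)
      also have "\<dots> = P $ x $ z - (r * cnj (w z)) * w x - (r * w x) * cnj (w z) + (r * r * w x * cnj (w z)) * s"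
        by (simp only: sum.distrib sum_subtractf sum_distrib_left[symmetric] Pw wP ww idem_entry[OF idem])
      also have "\<dots> = P $ x $ z - r * w x * cnj (w z) - (r * w x * cnj (w z)) * (1 - r * s)"
        by (simp add: algebra_simps)
      also have "\<dots> = Q $ x $ z" by (simp add: rs Qe)
      finally show ?thesis .
    qed
    then show ?thesis by (simp add: vec_eq_iff)
  qed
  have "trace Q = trace P - r * (\<Sum>y\<in>UNIV. cnj (w y) * w y)"
    unfolding trace_def Qe by (simp add: sum_subtractf sum_distrib_left mult_ac)
  then have "trace Q = trace P - 1" using ww rs by simp
  with hermQ idemQ show ?thesis by blast
qed

lemma proj_trace_nat:
  fixes P :: "complex^'k::finite^'k"
  assumes herm: "adjoint_mat P = P" and idem: "P ** P = P"
  shows "\<exists>m::nat. trace P = of_nat m"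
proof -
  have "\<forall>P :: complex^'k^'k. adjoint_mat P = P \<and> P ** P = P \<and> Re (trace P) < real n \<longrightarrow> (\<exists>m::nat. trace P = of_nat m)" for n
  proof (induction n)
    case 0
    show ?case
    proof (intro allI impI)
      fix P :: "complex^'k^'k" assume H: "adjoint_mat P = P \<and> P ** P = P \<and> Re (trace P) < real 0"
      then have "Re (trace P) \<ge> 0" using trace_herm_idem[of P] by (simp add: sum_nonneg)
      with H show "\<exists>m::nat. trace P = of_nat m" by simp
    qed
  next
    case (Suc n)
    show ?case
    proof (intro allI impI)
      fix P :: "complex^'k^'k" assume H: "adjoint_mat P = P \<and> P ** P = P \<and> Re (trace P) < real (Suc n)"
      show "\<exists>m::nat. trace P = of_nat m"
      proof (cases "P = 0")
        case True
        then have "trace P = of_nat 0" by (simp add: trace_def)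
        then show ?thesis by blast
      next
        case False
        then obtain Q :: "complex^'k^'k" where Q: "adjoint_mat Q = Q" "Q ** Q = Q" "trace Q = trace P - 1"
          using proj_trace_step[of P] H by blast
        then have "Re (trace Q) < real n" using H by simp
        with Q Suc.IH obtain m where "trace Q = of_nat m" by blast
        then have "trace P = of_nat (Suc m)" using Q(3) by (simp add: algebra_simps)
        then show ?thesis by blast
      qed
    qed
  qed
  moreover obtain n :: nat where "Re (trace P) < real n" using reals_Archimedean2 by blast
  ultimately show ?thesis using assms by blast
qed



lemma matrix_add_rdistrib': "((A + B) ** C) = (A ** C) + (B ** C)"
  by (simp add: vec_eq_iff mult_entry distrib_right sum.distrib)

lemma cscale_zero[simp]: "cscale_mat 0 A = 0"
  by (simp add: vec_eq_iff)

lemma sum_if_const: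
  fixes S :: "'k::finite set" and X Y :: complex
  shows "(\<Sum>a\<in>UNIV. if a \<in> S then X else Y) = of_nat (card S) * X + (of_nat CARD('k) - of_nat (card S)) * Y"
proof -
  have "(\<Sum>a\<in>UNIV. if a \<in> S then X else Y) = (\<Sum>a\<in>UNIV. Y + (if a \<in> S then X - Y else 0))"
    by (intro sum.cong refl) simp
  also have "\<dots> = of_nat CARD('k) * Y + of_nat (card S) * (X - Y)"
    by (simp add: sum.distrib sum.If_cases Int_def)
  finally show ?thesis by (simp add: algebra_simps)
qed

lemma lin_indep_u:
  fixes u1 u2 :: "complex^'n::finite^'n"
  assumes U1: "unitary_mat u1"
  and hyp: "\<forall>a b c :: complex. (cscale_mat a (mat 1 :: complex^'n^'n) + cscale_mat b (adjoint_mat u1 ** u2)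
             + cscale_mat c (adjoint_mat u2 ** u1) = 0) \<longrightarrow> a = 0 \<and> b = 0 \<and> c = 0"
  and Z: "\<forall>i p. x * u1 $ i $ p + y * u2 $ i $ p = 0"
  shows "x = 0 \<and> y = 0"
proof -
  have "cscale_mat x u1 + cscale_mat y u2 = 0" using Z by (simp add: vec_eq_iff)
  then have "adjoint_mat u1 ** (cscale_mat x u1 + cscale_mat y u2) = 0" by simp
  then have "cscale_mat x (adjoint_mat u1 ** u1) + cscale_mat y (adjoint_mat u1 ** u2) = 0"
    by (simp add: matrix_add_ldistrib mult_cscale_right)
  then have "cscale_mat x (mat 1 :: complex^'n^'n) + cscale_mat y (adjoint_mat u1 ** u2)
             + cscale_mat 0 (adjoint_mat u2 ** u1) = 0"
    using U1 by (simp add: unitary_mat_def)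
  with hyp show ?thesis by blast
qed

lemma mat_prod_eq: "(A :: complex^('n::finite \<times> 'k::finite)^('n \<times> 'k)) = B \<longleftrightarrow>
   (\<forall>i a j b. A $ (i,a) $ (j,b) = B $ (i,a) $ (j,b))"
  by (auto simp: vec_eq_iff)

definition bd :: "('k::finite \<Rightarrow> complex^'n::finite^'n) \<Rightarrow> complex^('n \<times> 'k)^('n \<times> 'k)" where
  "bd B = (\<chi> x y. if snd x = snd y then B (snd x) $ fst x $ fst y else 0)"

lemma bd_entry: "bd B $ (i,a) $ (j,b) = (if a = b then B a $ i $ j else 0)"
  by (simp add: bd_def)

lemma mat1_prod_entry: "(mat 1 :: complex^('n::finite \<times> 'k::finite)^('n \<times> 'k)) $ (i,a) $ (j,b) =
   (if a = b then (mat 1 :: complex^'n^'n) $ i $ j else 0)"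
  by (simp add: mat_def)

lemma bd_unitary:
  fixes B :: "'k::finite \<Rightarrow> complex^'n::finite^'n"
  assumes U: "\<And>a. unitary_mat (B a)"
  shows "unitary_mat (bd B)"
proof -
  have e1: "(bd B ** adjoint_mat (bd B)) $ (i,a) $ (j,b) = (if a = b then (B a ** adjoint_mat (B a)) $ i $ j else 0)" for i a j b
  proof -
    have "(bd B ** adjoint_mat (bd B)) $ (i,a) $ (j,b) =
       (\<Sum>l\<in>UNIV. \<Sum>c\<in>UNIV. (if c = a then (if a = b then B a $ i $ l * cnj (B a $ j $ l) else 0) else 0))"
      unfolding mult_entry sum_UNIV_prod adjoint_entry bd_entry by (intro sum.cong refl) auto
    also have "\<dots> = (if a = b then (B a ** adjoint_mat (B a)) $ i $ j else 0)"
      by (simp add: mult_entry)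
    finally show ?thesis .
  qed
  have e2: "(adjoint_mat (bd B) ** bd B) $ (i,a) $ (j,b) = (if a = b then (adjoint_mat (B a) ** B a) $ i $ j else 0)" for i a j b
  proof -
    have "(adjoint_mat (bd B) ** bd B) $ (i,a) $ (j,b) =
       (\<Sum>l\<in>UNIV. \<Sum>c\<in>UNIV. (if c = a then (if a = b then cnj (B a $ l $ i) * B a $ l $ j else 0) else 0))"
      unfolding mult_entry sum_UNIV_prod adjoint_entry bd_entry by (intro sum.cong refl) auto
    also have "\<dots> = (if a = b then (adjoint_mat (B a) ** B a) $ i $ j else 0)"
      by (simp add: mult_entry)
    finally show ?thesis .
  qed
  have "bd B ** adjoint_mat (bd B) = mat 1" "adjoint_mat (bd B) ** bd B = mat 1"
    using U unfolding mat_prod_eq unitary_mat_def by (simp_all add: e1 e2 mat1_prod_entry)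
  then show ?thesis unfolding unitary_mat_def by simp
qed



lemma bd_ptr:
  fixes B :: "'k::finite \<Rightarrow> complex^'n::finite^'n"
  shows "partial_tr (bd B ** (tensor_id x :: complex^('n \<times> 'k)^('n \<times> 'k)) ** adjoint_mat (bd B)) $ i $ j
    = (\<Sum>a\<in>UNIV. (B a ** x ** adjoint_mat (B a)) $ i $ j) / of_nat CARD('k)"
proof -
  have "(\<Sum>p\<in>UNIV. \<Sum>q\<in>UNIV. bd B $ (i,a) $ (p,b) * x $ p $ q * cnj (bd B $ (j,a) $ (q,b))) =
     (if b = a then (B a ** x ** adjoint_mat (B a)) $ i $ j else 0)" for a b
    by (cases "a = b") (simp_all add: bd_entry conj_entry)
  then show ?thesis unfolding ptr_entry by simp
qed

lemma sum_sep: fixes f :: "'a \<Rightarrow> complex" shows "(\<Sum>i\<in>A. \<Sum>a\<in>B. f a * g i) = (\<Sum>a\<in>B. f a) * (\<Sum>i\<in>A. g i)"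
  by (subst sum_product) (rule sum.swap)

lemma unitary_blocks:
  fixes u :: "complex^('n::finite \<times> 'k::finite)^('n \<times> 'k)" and u1 u2 :: "complex^'n^'n"
    and C D :: "complex^'k^'k"
  assumes uc: "\<And>i a p b. u $ (i,a) $ (p,b) = C $ a $ b * u1 $ i $ p + D $ a $ b * u2 $ i $ p"
  shows "(adjoint_mat u ** u) $ (p,b) $ (q,b') =
      (adjoint_mat C ** C) $ b $ b' * (adjoint_mat u1 ** u1) $ p $ q
    + (adjoint_mat C ** D) $ b $ b' * (adjoint_mat u1 ** u2) $ p $ q
    + (adjoint_mat D ** C) $ b $ b' * (adjoint_mat u2 ** u1) $ p $ q
    + (adjoint_mat D ** D) $ b $ b' * (adjoint_mat u2 ** u2) $ p $ q"
proof -
  have "(adjoint_mat u ** u) $ (p,b) $ (q,b') =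
     (\<Sum>i\<in>UNIV. \<Sum>a\<in>UNIV. (cnj (C $ a $ b) * C $ a $ b') * (cnj (u1 $ i $ p) * u1 $ i $ q)
        + (cnj (C $ a $ b) * D $ a $ b') * (cnj (u1 $ i $ p) * u2 $ i $ q)
        + (cnj (D $ a $ b) * C $ a $ b') * (cnj (u2 $ i $ p) * u1 $ i $ q)
        + (cnj (D $ a $ b) * D $ a $ b') * (cnj (u2 $ i $ p) * u2 $ i $ q))"
    unfolding mult_entry[of "adjoint_mat u"] sum_UNIV_prod adjoint_entry uc
    by (intro sum.cong refl) (simp add: algebra_simps)
  also have "\<dots> = (\<Sum>a\<in>UNIV. cnj (C $ a $ b) * C $ a $ b') * (\<Sum>i\<in>UNIV. cnj (u1 $ i $ p) * u1 $ i $ q)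
     + (\<Sum>a\<in>UNIV. cnj (C $ a $ b) * D $ a $ b') * (\<Sum>i\<in>UNIV. cnj (u1 $ i $ p) * u2 $ i $ q)
     + (\<Sum>a\<in>UNIV. cnj (D $ a $ b) * C $ a $ b') * (\<Sum>i\<in>UNIV. cnj (u2 $ i $ p) * u1 $ i $ q)
     + (\<Sum>a\<in>UNIV. cnj (D $ a $ b) * D $ a $ b') * (\<Sum>i\<in>UNIV. cnj (u2 $ i $ p) * u2 $ i $ q)"
    by (simp only: sum.distrib sum_sep)
  finally show ?thesis by (simp only: mult_entry adjoint_entry)
qed



lemma mat_eq_iff: "(A :: complex^'m::finite^'n::finite) = B \<longleftrightarrow> (\<forall>i j. A $ i $ j = B $ i $ j)"
  by (simp add: vec_eq_iff)

lemma proj_from_blocks: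
  fixes C D :: "complex^'k::finite^'k"
  assumes A1: "adjoint_mat C ** C + adjoint_mat D ** D = mat 1" and A2: "adjoint_mat C ** D = 0"
    and A3: "adjoint_mat D ** C = 0"
  shows "adjoint_mat (adjoint_mat C ** C) = adjoint_mat C ** C \<and>
         (adjoint_mat C ** C) ** (adjoint_mat C ** C) = adjoint_mat C ** C"
proof -
  define M where "M = C + D"
  define P where "P = adjoint_mat C ** C"
  have MM: "adjoint_mat M ** M = mat 1"
  proof -
    have "adjoint_mat M ** M = (adjoint_mat C ** C + adjoint_mat D ** D) + (adjoint_mat C ** D + adjoint_mat D ** C)"
      unfolding M_def adjoint_add matrix_add_ldistrib matrix_add_rdistrib' by (simp add: add_ac)
    then show ?thesis using A1 A2 A3 by simp
  qed
  then have MM': "M ** adjoint_mat M = mat 1" using matrix_left_right_inverse by blast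
  have MC: "adjoint_mat M ** C = P"
    unfolding M_def P_def adjoint_add matrix_add_rdistrib' using A3 by simp
  have CMP: "C = M ** P"
  proof -
    have "C = (M ** adjoint_mat M) ** C" using MM' by simp
    also have "\<dots> = M ** P" using MC[symmetric] by (simp add: matrix_mul_assoc)
    finally show ?thesis .
  qed
  have hP: "adjoint_mat P = P" unfolding P_def adjoint_mult by simp
  have "P = adjoint_mat (M ** P) ** (M ** P)" using CMP P_def by simp
  also have "\<dots> = adjoint_mat P ** ((adjoint_mat M ** M) ** P)"
    unfolding adjoint_mult by (simp add: matrix_mul_assoc)
  also have "\<dots> = P ** P" using MM hP by simp
  finally have "P ** P = P" by simp
  with hP show ?thesis unfolding P_def by simp
qed



lemma arith_aux: fixes K M X Y :: complex assumes "K \<noteq> 0"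
  shows "(M / K) * X + (1 - M / K) * Y = (M * X + (K - M) * Y) / K"
  using assms by (simp add: field_simps)

theorem mainTheorem3:
  fixes u1 u2 :: "complex^'n::finite^'n" and t :: real
  assumes "CARD('n) \<ge> 3"
    and "unitary_mat u1" and "unitary_mat u2"
    and "\<forall>a b c :: complex. (cscale_mat a (mat 1 :: complex^'n^'n) + cscale_mat b (adjoint_mat u1 ** u2)
             + cscale_mat c (adjoint_mat u2 ** u1) = 0) \<longrightarrow> a = 0 \<and> b = 0 \<and> c = 0"
    and "0 < t" and "t < 1"
    and "CARD('k::finite) \<ge> 2"
  defines "\<Phi> \<equiv> (\<lambda>x. t *\<^sub>R (u1 ** x ** adjoint_mat u1) + (1 - t) *\<^sub>R (u2 ** x ** adjoint_mat u2))"
  shows "(k_noisy TYPE('k) \<Phi> \<longleftrightarrow> (\<exists>m::int. t = of_int m / of_nat CARD('k)))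
         \<and> (t \<notin> \<rat> \<longrightarrow> \<not> k_noisy TYPE('k) \<Phi>)"
proof -
  note U1 = assms(2) and U2 = assms(3) and hyp = assms(4)
  have Phi_entry: "\<Phi> x $ i $ j = of_real t * (u1 ** x ** adjoint_mat u1) $ i $ j
      + of_real (1 - t) * (u2 ** x ** adjoint_mat u2) $ i $ j" for x i j
    unfolding assms(8) by (simp add: scaleR_conv_of_real[where 'a=complex])
  have kpos: "CARD('k) > 0" by simp
  have fwd: "\<exists>m::int. t = of_int m / of_nat CARD('k)" if kn: "k_noisy TYPE('k) \<Phi>"
  proof -
    obtain u :: "complex^('n \<times> 'k)^('n \<times> 'k)" where U: "unitary_mat u"
      and E: "\<forall>x. \<Phi> x = partial_tr (u ** (tensor_id x :: complex^('n \<times> 'k)^('n \<times> 'k)) ** adjoint_mat u)"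
      using kn unfolding k_noisy_def by blast
    define W :: "'k \<times> 'k \<Rightarrow> 'n \<times> 'n \<Rightarrow> complex" where "W ab ip = u $ (fst ip, fst ab) $ (snd ip, snd ab)" for ab ip
    define V1 :: "'n \<times> 'n \<Rightarrow> complex" where "V1 ip = u1 $ fst ip $ snd ip" for ip
    define V2 :: "'n \<times> 'n \<Rightarrow> complex" where "V2 ip = u2 $ fst ip $ snd ip" for ip
    have H: "\<forall>P Q. (\<Sum>ab\<in>UNIV. W ab P * cnj (W ab Q)) =
       of_real (real CARD('k) * t) * V1 P * cnj (V1 Q) + of_real (real CARD('k) * (1 - t)) * V2 P * cnj (V2 Q)"
    proof (intro allI)
      fix P Q :: "'n \<times> 'n"
      obtain i p where P: "P = (i,p)" by (cases P)
      obtain j q where Q: "Q = (j,q)" by (cases Q)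
      have "\<Phi> (Emat p q) $ i $ j = partial_tr (u ** (tensor_id (Emat p q) :: complex^('n \<times> 'k)^('n \<times> 'k)) ** adjoint_mat u) $ i $ j"
        using E by simp
      then have eq: "of_real t * (u1 $ i $ p * cnj (u1 $ j $ q)) + of_real (1 - t) * (u2 $ i $ p * cnj (u2 $ j $ q))
          = (\<Sum>a\<in>UNIV. \<Sum>b\<in>UNIV. u $ (i,a) $ (p,b) * cnj (u $ (j,a) $ (q,b))) / of_nat CARD('k)"
        unfolding Phi_entry ptr_entry conj_entry sum_Emat .
      have "(\<Sum>ab\<in>UNIV. W ab P * cnj (W ab Q)) = (\<Sum>a\<in>UNIV. \<Sum>b\<in>UNIV. u $ (i,a) $ (p,b) * cnj (u $ (j,a) $ (q,b)))"
        unfolding sum_UNIV_prod W_def P Q by simp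
      also have "\<dots> = of_nat CARD('k) * (of_real t * (u1 $ i $ p * cnj (u1 $ j $ q)) + of_real (1 - t) * (u2 $ i $ p * cnj (u2 $ j $ q)))"
        unfolding eq using kpos by simp
      finally show "(\<Sum>ab\<in>UNIV. W ab P * cnj (W ab Q)) =
       of_real (real CARD('k) * t) * V1 P * cnj (V1 Q) + of_real (real CARD('k) * (1 - t)) * V2 P * cnj (V2 Q)"
        unfolding V1_def V2_def P Q by (simp add: algebra_simps)
    qed
    have ind: "\<forall>x y. (\<forall>P. x * V1 P + y * V2 P = 0) \<longrightarrow> x = 0 \<and> y = 0"
    proof (intro allI impI)
      fix x y assume Z: "\<forall>P. x * V1 P + y * V2 P = 0"
      have "\<forall>i p. x * u1 $ i $ p + y * u2 $ i $ p = 0"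
      proof (intro allI)
        fix i p show "x * u1 $ i $ p + y * u2 $ i $ p = 0" using Z[rule_format, of "(i,p)"] unfolding V1_def V2_def by simp
      qed
      then show "x = 0 \<and> y = 0" by (rule lin_indep_u[OF U1 hyp])
    qed
    obtain c d where cd: "\<forall>ab P. W ab P = c ab * V1 P + d ab * V2 P"
      and csum: "(\<Sum>ab\<in>UNIV. c ab * cnj (c ab)) = of_real (real CARD('k) * t)"
      using kraus2[OF H ind] by blast
    define C :: "complex^'k^'k" where "C = (\<chi> a b. c (a,b))"
    define D :: "complex^'k^'k" where "D = (\<chi> a b. d (a,b))"
    have uc: "u $ (i,a) $ (p,b) = C $ a $ b * u1 $ i $ p + D $ a $ b * u2 $ i $ p" for i a p b
      using cd[rule_format, of "(a,b)" "(i,p)"] unfolding W_def V1_def V2_def C_def D_def by simp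
    have u1u1: "adjoint_mat u1 ** u1 = mat 1" and u2u2: "adjoint_mat u2 ** u2 = mat 1"
      and uu: "adjoint_mat u ** u = mat 1"
      using U1 U2 U unfolding unitary_mat_def by auto
    have coef: "(adjoint_mat C ** C + adjoint_mat D ** D) $ b $ b' = (mat 1 :: complex^'k^'k) $ b $ b'
       \<and> (adjoint_mat C ** D) $ b $ b' = 0 \<and> (adjoint_mat D ** C) $ b $ b' = 0" for b b'
    proof -
      have "cscale_mat ((adjoint_mat C ** C + adjoint_mat D ** D) $ b $ b' - (mat 1 :: complex^'k^'k) $ b $ b') (mat 1 :: complex^'n^'n)
        + cscale_mat ((adjoint_mat C ** D) $ b $ b') (adjoint_mat u1 ** u2)
        + cscale_mat ((adjoint_mat D ** C) $ b $ b') (adjoint_mat u2 ** u1) = 0"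
        unfolding mat_eq_iff
      proof (intro allI)
        fix p q :: 'n
        have "(adjoint_mat u ** u) $ (p,b) $ (q,b') = (if b = b' then (mat 1 :: complex^'n^'n) $ p $ q else 0)"
          unfolding uu mat1_prod_entry ..
        moreover note unitary_blocks[of u C u1 D u2 p b q b', OF uc]
        ultimately have "(if b = b' then (mat 1 :: complex^'n^'n) $ p $ q else 0) =
            (adjoint_mat C ** C) $ b $ b' * (mat 1 :: complex^'n^'n) $ p $ q
          + (adjoint_mat C ** D) $ b $ b' * (adjoint_mat u1 ** u2) $ p $ q
          + (adjoint_mat D ** C) $ b $ b' * (adjoint_mat u2 ** u1) $ p $ q
          + (adjoint_mat D ** D) $ b $ b' * (mat 1 :: complex^'n^'n) $ p $ q"
          unfolding u1u1 u2u2 by simp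
        moreover have "(mat 1 :: complex^'k^'k) $ b $ b' = (if b = b' then 1 else 0)" by (simp add: mat_def)
        ultimately show "(cscale_mat ((adjoint_mat C ** C + adjoint_mat D ** D) $ b $ b' - (mat 1 :: complex^'k^'k) $ b $ b') (mat 1 :: complex^'n^'n)
        + cscale_mat ((adjoint_mat C ** D) $ b $ b') (adjoint_mat u1 ** u2)
        + cscale_mat ((adjoint_mat D ** C) $ b $ b') (adjoint_mat u2 ** u1)) $ p $ q = (0 :: complex^'n^'n) $ p $ q"
          by (simp add: algebra_simps split: if_splits)
      qed
      then have "(adjoint_mat C ** C + adjoint_mat D ** D) $ b $ b' - (mat 1 :: complex^'k^'k) $ b $ b' = 0
        \<and> (adjoint_mat C ** D) $ b $ b' = 0 \<and> (adjoint_mat D ** C) $ b $ b' = 0"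
        using hyp by blast
      then show ?thesis by (simp only: right_minus_eq)
    qed
    have B1: "adjoint_mat C ** C + adjoint_mat D ** D = mat 1" using coef by (simp add: mat_eq_iff)
    have B2: "adjoint_mat C ** D = 0" using coef by (simp add: mat_eq_iff)
    have B3: "adjoint_mat D ** C = 0" using coef by (simp add: mat_eq_iff)
    obtain m :: nat where m: "trace (adjoint_mat C ** C) = of_nat m"
      using proj_trace_nat proj_from_blocks[OF B1 B2 B3] by blast
    have "trace (adjoint_mat C ** C) = (\<Sum>b\<in>UNIV. \<Sum>a\<in>UNIV. cnj (c (a,b)) * c (a,b))"
      unfolding trace_def mult_entry adjoint_entry C_def by simp
    also have "\<dots> = (\<Sum>a\<in>UNIV. \<Sum>b\<in>UNIV. c (a,b) * cnj (c (a,b)))"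
      by (subst sum.swap) (simp add: mult.commute)
    also have "\<dots> = of_real (real CARD('k) * t)" using csum unfolding sum_UNIV_prod .
    finally have "of_real (real CARD('k) * t) = (of_nat m :: complex)" using m by simp
    then have "real CARD('k) * t = real m"
      by (metis of_real_eq_iff of_real_of_nat_eq)
    then have "t = of_int (int m) / of_nat CARD('k)" using kpos by (simp add: field_simps)
    then show ?thesis by blast
  qed
  have bwd: "k_noisy TYPE('k) \<Phi>" if ex: "\<exists>m::int. t = of_int m / of_nat CARD('k)"
  proof -
    obtain m :: int where tm: "t = of_int m / of_nat CARD('k)" using ex by blast
    have tk: "t * real CARD('k) = of_int m" using tm kpos by simp
    have m0: "m > 0"
    proof -
      have "t * real CARD('k) > 0" using assms(5) kpos by simp
      then show ?thesis using tk by simp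
    qed
    have mk: "m < int CARD('k)"
    proof -
      have "t * real CARD('k) < real CARD('k)" using assms(6) kpos by simp
      then show ?thesis using tk by linarith
    qed
    obtain S :: "'k set" where S: "card S = nat m"
    proof -
      have mk': "nat m \<le> card (UNIV :: 'k set)" using mk by linarith
      show ?thesis using obtain_subset_with_card_n[OF mk'] that by blast
    qed
    define B where "B a = (if a \<in> S then u1 else u2)" for a
    have UB: "unitary_mat (bd B)" by (rule bd_unitary) (simp add: B_def U1 U2)
    have "\<Phi> x = partial_tr (bd B ** (tensor_id x :: complex^('n \<times> 'k)^('n \<times> 'k)) ** adjoint_mat (bd B))" for x
      unfolding mat_eq_iff
    proof (intro allI)
      fix i j
      have "(B a ** x ** adjoint_mat (B a)) $ i $ j = (if a \<in> S then (u1 ** x ** adjoint_mat u1) $ i $ j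
          else (u2 ** x ** adjoint_mat u2) $ i $ j)" for a by (simp add: B_def)
      then have "partial_tr (bd B ** (tensor_id x :: complex^('n \<times> 'k)^('n \<times> 'k)) ** adjoint_mat (bd B)) $ i $ j =
         (of_nat (card S) * (u1 ** x ** adjoint_mat u1) $ i $ j + (of_nat CARD('k) - of_nat (card S)) * (u2 ** x ** adjoint_mat u2) $ i $ j) / of_nat CARD('k)"
        unfolding bd_ptr by (simp add: sum_if_const)
      moreover have "(of_nat (card S) :: complex) = of_int m" using S m0 by simp
      moreover have "(of_real t :: complex) = of_int m / of_nat CARD('k)" using tm by simp
      ultimately show "\<Phi> x $ i $ j = partial_tr (bd B ** (tensor_id x :: complex^('n \<times> 'k)^('n \<times> 'k)) ** adjoint_mat (bd B)) $ i $ j"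
        unfolding Phi_entry using arith_aux[of "of_nat CARD('k)" "of_int m"] kpos by simp
    qed
    with UB show ?thesis unfolding k_noisy_def by blast
  qed
  have iff: "k_noisy TYPE('k) \<Phi> \<longleftrightarrow> (\<exists>m::int. t = of_int m / of_nat CARD('k))"
    using fwd bwd by blast
  have irr: "t \<notin> \<rat> \<longrightarrow> \<not> k_noisy TYPE('k) \<Phi>"
  proof (intro impI notI)
    assume "t \<notin> \<rat>" "k_noisy TYPE('k) \<Phi>"
    then obtain m :: int where "t = of_int m / of_nat CARD('k)" using fwd by blast
    then have "t \<in> \<rat>" by simp
    with \<open>t \<notin> \<rat>\<close> show False by simp
  qed
  from iff irr show ?thesis by blast
qed

end
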